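(* Let $p\in\mathbb N$ and for $j=1,\dots,p$ let $w_j(x)=\sum_{i=0}^\infty\lambda_{i,j,1}x^i$, $x\in\Delta_0=[-1,1]$, be real power series. The series $w_1,\dots,w_p$ converge uniformly on $\Delta_0$ to an M-Nikishin system of functions $(\widetilde s_1,\dots,\widetilde s_p)$ if and only if for each $k=1,\dots,p-1$ there exists a system of sequences $(C_{k,k},\dots,C_{p,k})$ (constructed as in the context) such that the restricted Hausdorff moment problems of all these sequences have solutions.
   Context: $\Delta_0=[-1,1]$, $\Delta_1=[0,1]$. $\mathcal M(\Delta_1)$: finite Borel measures on $\Delta_1$ with infinitely many points in the support and not changing sign. $\mathcal M_0(\Delta_1)$: those $\sigma\in\mathcal M(\Delta_1)$ with $\lim_{x\to1,\,x\in(0,1)}\left|\int_{\Delta_1}\frac{d\sigma(t)}{1-tx}\right|<+\infty$. For $\sigma\in\mathcal M_0(\Delta_1)$ put $\widetilde\sigma(x)=\int_{\Delta_1}\frac{d\sigma(t)}{1-tx}$. For $\sigma_\alpha,\sigma_\beta\in\mathcal M_0(\Delta_1)$ define the measure $[\sigma_\alpha,\sigma_\beta]$ by $d[\sigma_\alpha,\sigma_\beta](x)=\widetilde\sigma_\beta(x)\,d\sigma_\alpha(x)$, and recursively $[\sigma_1,\sigma_2,\dots,\sigma_k]=[\sigma_1,[\sigma_2,\dots,\sigma_k]]$. Given $\sigma_1,\dots,\sigma_p\in\mathcal M_0(\Delta_1)$, the M-Nikishin system of measures is $(s_1,\dots,s_p)$ with $s_1=\sigma_1$, $s_k=[\sigma_1,\dots,\sigma_k]$,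 and the corresponding M-Nikishin system of functions is $(\widetilde s_1,\dots,\widetilde s_p)$. The restricted Hausdorff moment problem for a real sequence $\{c_i\}_{i\ge0}$ asks for $\sigma\in\mathcal M_0(\Delta_1)$ with $c_i=\int t^i d\sigma(t)$ for all $i\ge0$. Construction of the sequences: put $\theta_{j,1}=(\lambda_{0,j,1},\lambda_{1,j,1},\dots)^\top$ for $j=1,\dots,p$ and let $\Theta_1=(\lambda_{i+m,1,1})_{i,m\ge0}$ (semi-infinite Hankel matrix). Recursively, given $\Theta_k=(\lambda_{i+m,k,k})_{i,m\ge0}$ and vectors $\theta_{j,k}$, $j=k,\dots,p$, look for vectors $\theta_{j,k+1}=(\lambda_{0,j,k+1},\lambda_{1,j,k+1},\dots)^\top$, $j=k+1,\dots,p$, solving $\Theta_k\theta_{j,k+1}=\theta_{j,k}$, meaning $\sum_{i=0}^\infty\lambda_{l+i,k,k}\lambda_{i,j,k+1}=\lambda_{l,j,k}$ for all $l\in\mathbb Z_+$; if such solutions exist set $\Theta_{k+1}=(\lambda_{i+m,k+1,k+1})_{i,m\ge0}$. The sequences are $C_{j,k}=\{\lambda_{i,j,k}\}_{i=0}^\infty$, $j=k,\dots,p$. If the linear systems at some step have no solution, the system $(C_{k,k},\dots,C_{p,k})$ is said not to exist. *)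

theory Defs
  imports "HOL-Analysis.Analysis"
begin

text \<open>A finite Borel measure on [0,1] that does not change sign is represented as a
pair (c, mu): a sign c in {1,-1} and a finite positive Borel measure mu on the real line
concentrated on [0,1]. The signed measure is c * mu.\<close>

type_synonym smeasure = "real \<times> real measure"

definition msupp :: "real measure \<Rightarrow> real set" where
  "msupp mu = {x. \<forall>e>0. emeasure mu (ball x e) \<noteq> 0}"

definition in_M :: "smeasure \<Rightarrow> bool" where
  "in_M s \<longleftrightarrow> (fst s = 1 \<or> fst s = -1) \<and> sets (snd s) = sets borel
     \<and> finite_measure (snd s) \<and> emeasure (snd s) (- {0..1}) = 0
     \<and> infinite (msupp (snd s))"

definition sint :: "smeasure \<Rightarrow> (real \<Rightarrow> real) \<Rightarrow> real" where
  "sint s f = fst s * (\<integral>t. f t \<partial>(snd s))"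

definition ctr :: "smeasure \<Rightarrow> real \<Rightarrow> real" where
  "ctr s x = sint s (\<lambda>t. 1 / (1 - t * x))"

definition in_M0 :: "smeasure \<Rightarrow> bool" where
  "in_M0 s \<longleftrightarrow> in_M s \<and> (\<exists>L. ((\<lambda>x. \<bar>ctr s x\<bar>) \<longlongrightarrow> L) (at 1 within {0<..<1}))"

definition bracket :: "smeasure \<Rightarrow> smeasure \<Rightarrow> smeasure" where
  "bracket a b = (fst a * fst b,
     density (snd a) (\<lambda>x. ennreal (\<integral>t. 1 / (1 - t * x) \<partial>(snd b))))"

fun nik :: "smeasure list \<Rightarrow> smeasure" where
  "nik [] = (1, null_measure borel)"
| "nik [s] = s"
| "nik (s # ss) = bracket s (nik ss)"

definition rhmp_solvable :: "(nat \<Rightarrow> real) \<Rightarrow> bool" where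
  "rhmp_solvable c \<longleftrightarrow> (\<exists>s. in_M0 s \<and> (\<forall>i. c i = sint s (\<lambda>t. t ^ i)))"

end

theory Submission
  imports Defs
begin


definition good :: "real measure \<Rightarrow> bool" where
"good \<mu> \<longleftrightarrow> sets \<mu> = sets borel \<and> finite_measure \<mu> \<and> emeasure \<mu> (-{0..<1}) = 0
   \<and> integrable \<mu> (\<lambda>t. 1/(1-t))"

lemma meas_b: "sets M = sets borel \<Longrightarrow> f \<in> borel_measurable borel \<Longrightarrow> f \<in> borel_measurable M"
  using measurable_cong_sets by blast

lemma good_AE: assumes "good \<mu>" shows "AE t in \<mu>. 0 \<le> t \<and> t < 1"
proof (rule AE_I')
  show "-{0..<1} \<in> null_sets \<mu>" using assms unfolding good_def by (auto simp: null_sets_def)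
qed auto

lemma good_fin: "good \<mu> \<Longrightarrow> finite_measure \<mu>" by (simp add: good_def)

lemma good_intb:
  fixes f :: "real \<Rightarrow> real" and B :: real
  assumes g: "good \<mu>" and m: "f \<in> borel_measurable borel"
    and b: "\<And>t. 0 \<le> t \<Longrightarrow> t < 1 \<Longrightarrow> \<bar>f t\<bar> \<le> B"
  shows "integrable \<mu> f"
proof -
  interpret finite_measure \<mu> using g by (simp add: good_def)
  show ?thesis
    apply (rule integrable_const_bound[where B=B])
    using good_AE[OF g] b apply (auto elim!: AE_mp)[1]
    using meas_b[OF _ m] g by (simp add: good_def)
qed

lemma good_intd:
  fixes f :: "real \<Rightarrow> real" and C :: real
  assumes g: "good \<mu>" and m: "f \<in> borel_measurable borel"
    and b: "\<And>t. 0 \<le> t \<Longrightarrow> t < 1 \<Longrightarrow> \<bar>f t\<bar> \<le> C * (1/(1-t))"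
  shows "integrable \<mu> f"
proof -
  have i: "integrable \<mu> (\<lambda>t. C * (1/(1-t)))" using g unfolding good_def by (intro integrable_mult_right) auto
  have mm: "f \<in> borel_measurable \<mu>" using meas_b[OF _ m] g by (simp add: good_def)
  have ae: "AE x in \<mu>. norm (f x) \<le> norm (C * (1 / (1 - x)))"
    using good_AE[OF g] apply (rule AE_mp)
    apply (rule AE_I2, clarify) subgoal for x using b[of x] abs_ge_self[of "C*(1/(1-x))"] by simp done
  show ?thesis by (rule Bochner_Integration.integrable_bound[OF i mm ae])
qed


lemma ineq1: fixes t x :: real assumes "0 \<le> t" "t < 1" "\<bar>x\<bar> \<le> 1"
  shows "0 < 1 - t" "1 - t \<le> 1 - t*x" "0 < 1 - t*x"
proof -
  have "x \<le> 1" using assms(3) by (simp add: abs_le_iff)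
  then have "t*x \<le> t*1" using assms(1) by (rule mult_left_mono)
  then have "t*x \<le> t" by simp
  then show "0 < 1 - t" "1 - t \<le> 1 - t*x" "0 < 1 - t*x" using assms(2) by linarith+
qed

lemma ineq2: fixes t x :: real assumes "0 \<le> t" "t < 1" "\<bar>x\<bar> \<le> 1"
  shows "\<bar>1/(1-t*x)\<bar> \<le> 1 * (1/(1-t))"
proof -
  note i = ineq1[OF assms]
  have "1/(1-t*x) \<le> 1/(1-t)"
    by (rule divide_left_mono) (use i in \<open>simp_all add: mult_pos_pos\<close>)
  moreover have "\<bar>1/(1-t*x)\<bar> = 1/(1-t*x)" using i(3) by simp
  ultimately show ?thesis by simp
qed

lemma ineq3: fixes t x :: real assumes "0 \<le> t" "t < 1" "\<bar>x\<bar> \<le> 1"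
  shows "\<bar>(t*x)^n/(1-t*x)\<bar> \<le> t^n/(1-t)" "t^n/(1-t) \<le> 1 * (1/(1-t))"
proof -
  note i = ineq1[OF assms]
  have p: "\<bar>x\<bar>^n \<le> 1" using assms(3) by (rule power_le_one[OF abs_ge_zero])
  have "\<bar>(t*x)^n\<bar> = t^n * \<bar>x\<bar>^n" using assms(1) by (simp add: abs_mult power_abs power_mult_distrib)
  also have "\<dots> \<le> t^n" using mult_left_le[OF p zero_le_power[OF assms(1), of n]] .
  finally have a: "\<bar>(t*x)^n\<bar> \<le> t^n" .
  have "\<bar>(t*x)^n/(1-t*x)\<bar> = \<bar>(t*x)^n\<bar>/(1-t*x)" using i(3) by (simp add: abs_divide)
  also have "\<dots> \<le> t^n/(1-t)"
    by (rule frac_le) (use a i assms(1) in auto)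
  finally show "\<bar>(t*x)^n/(1-t*x)\<bar> \<le> t^n/(1-t)" .
  have "t^n \<le> 1" using assms by (simp add: power_le_one)
  then show "t^n/(1-t) \<le> 1 * (1/(1-t))" using i(1)
    by (simp add: divide_right_mono)
qed

lemma good_series:
  assumes g: "good \<mu>" and c: "\<bar>c\<bar> = 1"
  shows "uniform_limit {-1..1} (\<lambda>n x. \<Sum>i<n. (c * (\<integral>t. t^i \<partial>\<mu>)) * x^i)
           (\<lambda>x. c * (\<integral>t. 1/(1-t*x) \<partial>\<mu>)) sequentially"
proof -
  define e where "e n = (\<integral>t. t^n/(1-t) \<partial>\<mu>)" for n
  have sb: "sets \<mu> = sets borel" using g by (simp add: good_def)
  have intw: "integrable \<mu> (\<lambda>t. 1/(1-t))" using g by (simp add: good_def)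
  have e0: "e \<longlonglongrightarrow> 0"
  proof -
    have "(\<lambda>n. \<integral>t. t^n/(1-t) \<partial>\<mu>) \<longlonglongrightarrow> (\<integral>t. 0 \<partial>\<mu>)"
    proof (rule integral_dominated_convergence[where w="\<lambda>t. 1/(1-t)"])
      show "(\<lambda>t. 0::real) \<in> borel_measurable \<mu>" by simp
      show "(\<lambda>t. t^n/(1-t)) \<in> borel_measurable \<mu>" for n by (rule meas_b[OF sb]) simp
      show "integrable \<mu> (\<lambda>t. 1/(1-t))" by (rule intw)
      show "AE t in \<mu>. (\<lambda>n. t^n/(1-t)) \<longlonglongrightarrow> 0"
        using good_AE[OF g] apply (rule AE_mp)
        apply (rule AE_I2, clarify)
        apply (rule tendsto_divide_zero) by (rule LIMSEQ_power_zero) simp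
      show "AE t in \<mu>. norm (t^n/(1-t)) \<le> 1/(1-t)" for n
        using good_AE[OF g] apply (rule AE_mp)
        apply (rule AE_I2, clarify)
        subgoal for t using ineq3[of t 1 n] by simp
        done
    qed
    moreover have "e = (\<lambda>n. \<integral>t. t^n/(1-t) \<partial>\<mu>)" by (rule ext) (simp add: e_def)
    ultimately show ?thesis by simp
  qed
  have bnd: "\<bar>(\<integral>t. 1/(1-t*x) \<partial>\<mu>) - (\<Sum>i<n. (\<integral>t. t^i \<partial>\<mu>) * x^i)\<bar> \<le> e n"
    if x: "x \<in> {-1..1}" for x n
  proof -
    have ax: "\<bar>x\<bar> \<le> 1" using x by auto
    have it: "integrable \<mu> (\<lambda>t. t^i)" for i
      by (rule good_intb[OF g, where B=1]) (auto simp: power_le_one)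
    have i1: "integrable \<mu> (\<lambda>t. 1/(1-t*x))"
      by (rule good_intd[OF g, where C=1]) (use ineq2 ax in auto)
    have i2: "integrable \<mu> (\<lambda>t. \<Sum>i<n. t^i * x^i)"
      apply (rule Bochner_Integration.integrable_sum) apply (rule Bochner_Integration.integrable_mult_left) using it by auto
    have i3: "integrable \<mu> (\<lambda>t. t^n/(1-t))"
      apply (rule good_intd[OF g, where C=1]) apply simp
      subgoal for t using ineq3(2)[of t 1 n] ineq1[of t 1] by simp
      done
    have "(\<Sum>i<n. (\<integral>t. t^i \<partial>\<mu>) * x^i) = (\<integral>t. (\<Sum>i<n. t^i * x^i) \<partial>\<mu>)"
      using it by (subst Bochner_Integration.integral_sum) auto
    then have "(\<integral>t. 1/(1-t*x) \<partial>\<mu>) - (\<Sum>i<n. (\<integral>t. t^i \<partial>\<mu>) * x^i)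
        = (\<integral>t. 1/(1-t*x) - (\<Sum>i<n. t^i * x^i) \<partial>\<mu>)"
      using i1 i2 by simp
    also have "\<dots> = (\<integral>t. (t*x)^n/(1-t*x) \<partial>\<mu>)"
    proof (rule integral_cong_AE)
      show "(\<lambda>t. 1/(1-t*x) - (\<Sum>i<n. t^i * x^i)) \<in> borel_measurable \<mu>"
        by (rule meas_b[OF sb]) simp
      show "(\<lambda>t. (t*x)^n/(1-t*x)) \<in> borel_measurable \<mu>" by (rule meas_b[OF sb]) simp
      show "AE t in \<mu>. 1/(1-t*x) - (\<Sum>i<n. t^i * x^i) = (t*x)^n/(1-t*x)"
        using good_AE[OF g] apply (rule AE_mp)
        apply (rule AE_I2, clarify)
        subgoal for t
        proof -
          assume "0 \<le> t" "t < 1"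
          then have nz: "1 - t*x \<noteq> 0" "t*x \<noteq> 1" using ineq1[of t x] ax by auto
          have "(\<Sum>i<n. t^i * x^i) = (\<Sum>i<n. (t*x)^i)" by (simp add: power_mult_distrib)
          also have "\<dots> = (1 - (t*x)^n)/(1-t*x)" using nz by (simp add: sum_gp_strict)
          finally show ?thesis using nz by (simp add: field_simps)
        qed
        done
    qed
    finally have eq: "(\<integral>t. 1/(1-t*x) \<partial>\<mu>) - (\<Sum>i<n. (\<integral>t. t^i \<partial>\<mu>) * x^i) = (\<integral>t. (t*x)^n/(1-t*x) \<partial>\<mu>)" .
    have "\<bar>\<integral>t. (t*x)^n/(1-t*x) \<partial>\<mu>\<bar> \<le> (\<integral>t. norm ((t*x)^n/(1-t*x)) \<partial>\<mu>)"
      using integral_norm_bound[of \<mu> "\<lambda>t. (t*x)^n/(1-t*x)"] by simp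
    also have "\<dots> \<le> e n" unfolding e_def
    proof (rule integral_mono_AE)
      show "integrable \<mu> (\<lambda>t. norm ((t*x)^n/(1-t*x)))"
        apply (rule good_intd[OF g, where C=1])
         apply simp
        subgoal for t using order_trans[OF ineq3(1)[of t x n] ineq3(2)[of t x n]] ax by simp
        done
      show "integrable \<mu> (\<lambda>t. t^n/(1-t))" by (rule i3)
      show "AE t in \<mu>. norm ((t*x)^n/(1-t*x)) \<le> t^n/(1-t)"
        using good_AE[OF g] apply (rule AE_mp)
        apply (rule AE_I2, clarify)
        subgoal for t using ineq3[of t x n] ax by simp
        done
    qed
    finally show ?thesis using eq by simp
  qed
  show ?thesis
  proof (rule uniform_limitI)
    fix r :: real assume r: "r > 0"
    from e0 r have "\<forall>\<^sub>F n in sequentially. \<bar>e n\<bar> < r" by (auto simp: tendsto_iff dist_real_def)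
    then show "\<forall>\<^sub>F n in sequentially. \<forall>x\<in>{-1..1}. dist (\<Sum>i<n. (c * (\<integral>t. t^i \<partial>\<mu>)) * x^i)
           (c * (\<integral>t. 1/(1-t*x) \<partial>\<mu>)) < r"
    proof (rule eventually_mono, intro ballI)
      fix n x assume en: "\<bar>e n\<bar> < r" and x: "x \<in> {-1..(1::real)}"
      have "dist (\<Sum>i<n. (c * (\<integral>t. t^i \<partial>\<mu>)) * x^i) (c * (\<integral>t. 1/(1-t*x) \<partial>\<mu>))
          = \<bar>c\<bar> * \<bar>(\<integral>t. 1/(1-t*x) \<partial>\<mu>) - (\<Sum>i<n. (\<integral>t. t^i \<partial>\<mu>) * x^i)\<bar>"
      proof -
        have "(\<Sum>i<n. (c * (\<integral>t. t^i \<partial>\<mu>)) * x^i) = c * (\<Sum>i<n. (\<integral>t. t^i \<partial>\<mu>) * x^i)"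
          by (simp add: sum_distrib_left mult.assoc)
        then have "dist (\<Sum>i<n. (c * (\<integral>t. t^i \<partial>\<mu>)) * x^i) (c * (\<integral>t. 1/(1-t*x) \<partial>\<mu>))
           = \<bar>c * ((\<Sum>i<n. (\<integral>t. t^i \<partial>\<mu>) * x^i) - (\<integral>t. 1/(1-t*x) \<partial>\<mu>))\<bar>"
          by (simp only: dist_real_def right_diff_distrib)
        then show ?thesis by (simp only: abs_mult abs_minus_commute)
      qed
      also have "\<dots> \<le> e n" using bnd[OF x, of n] c by simp
      finally show "dist (\<Sum>i<n. (c * (\<integral>t. t^i \<partial>\<mu>)) * x^i) (c * (\<integral>t. 1/(1-t*x) \<partial>\<mu>)) < r"
        using en by simp
    qed
  qed
qed




lemma AE01: fixes \<mu> :: "real measure"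
  assumes "sets \<mu> = sets borel" "emeasure \<mu> (-{0..1}) = 0"
  shows "AE t in \<mu>. 0 \<le> t \<and> t \<le> 1"
proof (rule AE_I'[where N="-{0..1}"])
  show "-{0..1} \<in> null_sets \<mu>" using assms by (simp add: null_sets_def)
  show "{x \<in> space \<mu>. \<not> (0 \<le> x \<and> x \<le> 1)} \<subseteq> -{0..1}" by auto
qed

lemma M0_good:
  assumes M0: "in_M0 s" shows "good (snd s)"
proof -
  define \<mu> where "\<mu> = snd s"
  define c where "c = fst s"
  obtain L where lim: "((\<lambda>x. \<bar>ctr s x\<bar>) \<longlongrightarrow> L) (at 1 within {0<..<1})"
    using M0 by (auto simp: in_M0_def)
  have inM: "in_M s" using M0 by (simp add: in_M0_def)
  have c: "\<bar>c\<bar> = 1" using inM by (auto simp: in_M_def c_def)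
  have sb: "sets \<mu> = sets borel" and fin: "finite_measure \<mu>" and n01: "emeasure \<mu> (-{0..1}) = 0"
    using inM by (auto simp: in_M_def \<mu>_def)
  interpret finite_measure \<mu> by (rule fin)
  have AE: "AE t in \<mu>. 0 \<le> t \<and> t \<le> 1" by (rule AE01[OF sb n01])
  have Fint: "integrable \<mu> (\<lambda>t. 1/(1-t*x))" if x: "0 \<le> x" "x < 1" for x
  proof (rule integrable_const_bound[where B="1/(1-x)"])
    show "AE t in \<mu>. norm (1/(1-t*x)) \<le> 1/(1-x)"
      using AE apply (rule AE_mp) apply (rule AE_I2, clarify)
    proof -
      fix t :: real assume t: "0 \<le> t" "t \<le> 1"
      have "t*x \<le> x" using t x by (simp add: mult_left_le_one_le)
      then have "0 < 1 - x" "1 - x \<le> 1 - t*x" using x by auto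
      then show "norm (1/(1-t*x)) \<le> 1/(1-x)" by (simp add: frac_le)
    qed
    show "(\<lambda>t. 1/(1-t*x)) \<in> borel_measurable \<mu>" by (rule meas_b[OF sb]) simp
  qed
  have Fnn: "AE t in \<mu>. 0 \<le> 1/(1-t*x)" if x: "0 \<le> x" "x < 1" for x
    using AE apply (rule AE_mp) apply (rule AE_I2, clarify)
  proof -
    fix t :: real assume t: "0 \<le> t" "t \<le> 1"
    have "t*x \<le> x" using t x by (simp add: mult_left_le_one_le)
    then show "0 \<le> 1/(1-t*x)" using x by auto
  qed
  have ctrF: "\<bar>ctr s x\<bar> = (\<integral>t. 1/(1-t*x) \<partial>\<mu>)" if x: "0 \<le> x" "x < 1" for x
  proof -
    have "0 \<le> (\<integral>t. 1/(1-t*x) \<partial>\<mu>)" by (rule integral_nonneg_AE[OF Fnn[OF x]])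
    then show ?thesis using c by (simp add: ctr_def sint_def abs_mult \<mu>_def c_def)
  qed
  have "eventually (\<lambda>x. \<bar>ctr s x\<bar> < L + 1) (at 1 within {0<..<1})"
    using lim by (rule order_tendstoD(2)) simp
  then obtain d where d: "d > 0" and dd: "\<And>x. x \<in> {0<..<1} \<Longrightarrow> x \<noteq> 1 \<Longrightarrow> dist x 1 < d \<Longrightarrow> \<bar>ctr s x\<bar> < L + 1"
    unfolding eventually_at by blast
  define e where "e = min d 1 / 2"
  have e: "0 < e" "e \<le> 1/2" "e < d" using d by (auto simp: e_def)
  define x where "x n = 1 - e / real (Suc n)" for n
  have xn: "0 < x n" "x n < 1" "dist (x n) 1 < d" for n
  proof -
    have "e / real (Suc n) \<le> e" using e by (simp add: divide_le_eq)
    moreover have "0 < e / real (Suc n)" using e by simp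
    ultimately show "0 < x n" "x n < 1" "dist (x n) 1 < d" using e by (auto simp: x_def dist_real_def)
  qed
  have xmono: "x n \<le> x (Suc n)" for n
    using e by (simp add: x_def frac_le)
  define f where "f n t = ennreal (1/(1-t*x n))" for n t
  have fm: "f n \<in> borel_measurable \<mu>" for n unfolding f_def by (rule meas_b[OF sb]) simp
  have bnd: "integral\<^sup>N \<mu> (f n) \<le> ennreal (L+1)" for n
  proof -
    have x01: "0 \<le> x n" "x n < 1" using xn[of n] by auto
    have "integral\<^sup>N \<mu> (f n) = ennreal (\<integral>t. 1/(1-t*x n) \<partial>\<mu>)"
      unfolding f_def by (rule nn_integral_eq_integral[OF Fint[OF x01] Fnn[OF x01]])
    also have "\<dots> = ennreal \<bar>ctr s (x n)\<bar>" using ctrF[OF x01] by simp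
    also have "\<dots> \<le> ennreal (L+1)" using dd[of "x n"] xn[of n] by (auto intro: ennreal_leI)
    finally show ?thesis .
  qed
  have fmono: "AE t in \<mu>. f n t \<le> f (Suc n) t" for n
    using AE apply (rule AE_mp) apply (rule AE_I2, clarify)
  proof -
    fix t :: real assume t: "0 \<le> t" "t \<le> 1"
    have "t * x n \<le> t * x (Suc n)" using t xmono by (simp add: mult_left_mono)
    moreover have "t * x (Suc n) < 1"
      using mult_left_le_one_le[of "x (Suc n)" t] t xn[of "Suc n"] by linarith
    ultimately show "f n t \<le> f (Suc n) t" unfolding f_def by (intro ennreal_leI frac_le) auto
  qed
  have "(\<integral>\<^sup>+t. (SUP n. f n t) \<partial>\<mu>) = (SUP n. integral\<^sup>N \<mu> (f n))"
    by (rule nn_integral_monotone_convergence_SUP_AE[of f]) (use fmono fm in auto)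
  also have "\<dots> \<le> ennreal (L+1)" using bnd by (simp add: SUP_least)
  finally have supb: "(\<integral>\<^sup>+t. (SUP n. f n t) \<partial>\<mu>) \<le> ennreal (L+1)" .
  define k where "k t = indicator {0..<1} t * (1/(1-t))" for t :: real
  have km: "k \<in> borel_measurable \<mu>" unfolding k_def by (rule meas_b[OF sb]) simp
  have hle: "AE t in \<mu>. ennreal (k t) + top * indicator {1} t \<le> (SUP n. f n t)"
    using AE apply (rule AE_mp) apply (rule AE_I2, clarify)
  proof -
    fix t :: real assume t: "0 \<le> t" "t \<le> 1"
    show "ennreal (k t) + top * indicator {1} t \<le> (SUP n. f n t)"
    proof (cases "t = 1")
      case True
      have "f n t \<ge> of_nat n" for n
      proof -
        have "1 - t * x n = e / real (Suc n)" using True by (simp add: x_def)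
        then have "f n t = ennreal (real (Suc n) / e)" unfolding f_def by simp
        moreover have "real n \<le> real (Suc n) / e"
        proof -
          have "real n * e \<le> real n" using e by (intro mult_left_le) auto
          then have "real n * e \<le> real (Suc n)" by simp
          then show ?thesis using e by (simp add: le_divide_eq)
        qed
        ultimately show ?thesis by (simp add: ennreal_of_nat_eq_real_of_nat ennreal_leI)
      qed
      then have "(SUP n. of_nat n :: ennreal) \<le> (SUP n. f n t)" by (intro SUP_mono) auto
      then have supinf: "(SUP n. f n t) = top" using ennreal_SUP_of_nat_eq_top by (simp add: top_unique)
      show ?thesis unfolding supinf by simp
    next
      case False
      then have t1: "t < 1" using t by simp
      have "(\<lambda>n. e / real (Suc n)) \<longlonglongrightarrow> 0"
        using LIMSEQ_Suc[OF lim_const_over_n[of e]] by simp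
      then have "(\<lambda>n. x n) \<longlonglongrightarrow> 1 - 0" unfolding x_def by (intro tendsto_intros)
      then have "(\<lambda>n. 1/(1-t*x n)) \<longlonglongrightarrow> 1/(1-t*1)"
        using t1 by (intro tendsto_intros) auto
      then have lf: "(\<lambda>n. f n t) \<longlonglongrightarrow> ennreal (1/(1-t))" unfolding f_def
        by (intro tendsto_ennrealI) simp
      have "ennreal (1/(1-t)) \<le> (SUP n. f n t)"
      proof (rule tendsto_le[OF _ tendsto_const lf])
        show "\<forall>\<^sub>F n in sequentially. f n t \<le> (SUP n. f n t)"
          by (rule always_eventually, rule allI, rule SUP_upper) simp
      qed simp
      then show ?thesis using t t1 by (simp add: k_def)
    qed
  qed
  have eq: "(\<integral>\<^sup>+t. ennreal (k t) + top * indicator {1} t \<partial>\<mu>) = (\<integral>\<^sup>+t. ennreal (k t) \<partial>\<mu>) + top * emeasure \<mu> {1}"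
    using km sb by (subst nn_integral_add) (auto simp: nn_integral_cmult_indicator)
  have le: "(\<integral>\<^sup>+t. ennreal (k t) + top * indicator {1} t \<partial>\<mu>) \<le> (\<integral>\<^sup>+t. (SUP n. f n t) \<partial>\<mu>)"
    by (rule nn_integral_mono_AE[OF hle])
  have tot: "(\<integral>\<^sup>+t. ennreal (k t) \<partial>\<mu>) + top * emeasure \<mu> {1} \<le> ennreal (L+1)"
    using le supb unfolding eq by (rule order_trans)
  have tot': "(\<integral>\<^sup>+t. ennreal (k t) \<partial>\<mu>) + top * emeasure \<mu> {1} < top"
    using tot ennreal_less_top[of "L+1"] by (rule le_less_trans)
  then have kfin: "(\<integral>\<^sup>+t. ennreal (k t) \<partial>\<mu>) < top" and tm: "top * emeasure \<mu> {1} < top"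
    by simp_all
  have m1: "emeasure \<mu> {1} = 0"
  proof (rule ccontr)
    assume "emeasure \<mu> {1} \<noteq> 0"
    then have "top * emeasure \<mu> {1} = top" by (simp add: ennreal_top_mult)
    then show False using tm by simp
  qed
  have n0: "emeasure \<mu> (-{0..<1}) = 0"
  proof -
    have e: "-{0..<1} = -{0..1} \<union> {1::real}" by auto
    have "emeasure \<mu> (-{0..1} \<union> {1}) \<le> emeasure \<mu> (-{0..1}) + emeasure \<mu> {1}"
      using sb by (intro emeasure_subadditive) auto
    then have "emeasure \<mu> (-{0..<1}) \<le> emeasure \<mu> (-{0..1}) + emeasure \<mu> {1}"
      unfolding e .
    then show ?thesis using n01 m1 by simp
  qed
  have ik: "integrable \<mu> k"
  proof -
    have "norm (k t) = k t" for t by (simp add: k_def indicator_def)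
    then show ?thesis using km kfin by (simp add: integrable_iff_bounded)
  qed
  have AE1: "AE t in \<mu>. 0 \<le> t \<and> t < 1"
  proof (rule AE_I'[where N="-{0..<1}"])
    show "-{0..<1} \<in> null_sets \<mu>" using n0 sb by (simp add: null_sets_def)
    show "{x \<in> space \<mu>. \<not> (0 \<le> x \<and> x < 1)} \<subseteq> -{0..<1}" by auto
  qed
  have "integrable \<mu> (\<lambda>t. 1/(1-t))"
  proof (subst integrable_cong_AE[where g=k])
    show "(\<lambda>t. 1/(1-t)) \<in> borel_measurable \<mu>" by (rule meas_b[OF sb]) simp
    show "k \<in> borel_measurable \<mu>" by (rule km)
    show "AE t in \<mu>. 1/(1-t) = k t"
      using AE1 by (rule AE_mp) (rule AE_I2, auto simp: k_def)
    show "integrable \<mu> k" by (rule ik)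
  qed
  then show ?thesis using sb fin n0 by (simp add: good_def \<mu>_def)
qed






lemma ctr_eq: "ctr s = (\<lambda>x. fst s * (\<integral>t. 1/(1-t*x) \<partial>snd s))"
  by (rule ext) (simp add: ctr_def sint_def)

lemma sint_pow: "sint s (\<lambda>t. t^i) = fst s * (\<integral>t. t^i \<partial>snd s)"
  by (simp add: sint_def)

lemma ctr_series:
  assumes "in_M s" "good (snd s)"
  shows "uniform_limit {-1..1} (\<lambda>n x. \<Sum>i<n. sint s (\<lambda>t. t^i) * x^i) (ctr s) sequentially"
proof -
  have "\<bar>fst s\<bar> = 1" using assms by (auto simp: in_M_def)
  from good_series[OF assms(2) this] show ?thesis unfolding ctr_eq sint_pow .
qed

lemma good_M0:
  assumes "in_M s" "good (snd s)" shows "in_M0 s"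
proof -
  have "continuous_on {-1..1} (ctr s)"
    by (rule uniform_limit_theorem[OF _ ctr_series[OF assms]])
       (auto intro!: always_eventually continuous_intros)
  then have "(ctr s \<longlongrightarrow> ctr s 1) (at 1 within {-1..1})"
    by (simp add: continuous_on_def)
  then have "(ctr s \<longlongrightarrow> ctr s 1) (at 1 within {0<..<1})"
    by (rule tendsto_within_subset) auto
  then have "((\<lambda>x. \<bar>ctr s x\<bar>) \<longlongrightarrow> \<bar>ctr s 1\<bar>) (at 1 within {0<..<1})"
    by (rule tendsto_rabs)
  then show ?thesis unfolding in_M0_def using assms(1) by blast
qed

lemma nonneg_moment: assumes "good \<mu>" shows "0 \<le> (\<integral>t. t^i \<partial>\<mu>)"
  apply (rule integral_nonneg_AE) using good_AE[OF assms] apply (rule AE_mp) apply (rule AE_I2) by auto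



lemma g_meas:
  fixes \<nu> :: "real measure"
  assumes sb: "sets \<nu> = sets borel" and fin: "finite_measure \<nu>"
  shows "(\<lambda>x. \<integral>t. 1/(1-t*x) \<partial>\<nu>) \<in> borel_measurable borel"
proof -
  interpret finite_measure \<nu> by (rule fin)
  have ps: "sets (borel \<Otimes>\<^sub>M \<nu>) = sets ((borel::real measure) \<Otimes>\<^sub>M (borel::real measure))"
    by (rule sets_pair_measure_cong) (auto simp: sb)
  have "(\<lambda>(x::real, t::real). 1/(1-t*x)) \<in> borel_measurable (borel \<Otimes>\<^sub>M borel)"
    by measurable
  then have "(\<lambda>(x::real, t::real). 1/(1-t*x)) \<in> borel_measurable (borel \<Otimes>\<^sub>M \<nu>)"
    using measurable_cong_sets[OF ps refl] by blast
  then show ?thesis using borel_measurable_lebesgue_integral[of "\<lambda>x t. 1/(1-t*x)" borel] by simp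
qed



lemma bracket_main:
  assumes a: "in_M0 a" and b: "in_M0 b"
  shows "in_M0 (bracket a b)"
    and "\<And>l. (\<lambda>i. sint a (\<lambda>t. t^(l+i)) * sint b (\<lambda>t. t^i)) sums sint (bracket a b) (\<lambda>t. t^l)"
proof -
  define \<mu> where "\<mu> = snd a"
  define \<nu> where "\<nu> = snd b"
  have g\<mu>: "good \<mu>" using M0_good[OF a] by (simp add: \<mu>_def)
  have g\<nu>: "good \<nu>" using M0_good[OF b] by (simp add: \<nu>_def)
  have sb\<mu>: "sets \<mu> = sets borel" and sb\<nu>: "sets \<nu> = sets borel"
    using g\<mu> g\<nu> by (auto simp: good_def)
  have fin\<mu>: "finite_measure \<mu>" and fin\<nu>: "finite_measure \<nu>" using g\<mu> g\<nu> by (auto simp: good_def)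
  have n\<mu>: "emeasure \<mu> (-{0..<1}) = 0" using g\<mu> by (simp add: good_def)
  define g where "g x = (\<integral>t. 1/(1-t*x) \<partial>\<nu>)" for x
  define K where "K = (\<integral>t. 1/(1-t) \<partial>\<nu>)"
  define m where "m i = (\<integral>t. t^i \<partial>\<nu>)" for i
  define m0 where "m0 = measure \<nu> (space \<nu>)"
  define D where "D = density \<mu> (\<lambda>x. ennreal (g x))"
  have brk: "bracket a b = (fst a * fst b, D)"
    by (simp add: bracket_def D_def g_def \<mu>_def \<nu>_def)
  have gm: "g \<in> borel_measurable borel" unfolding g_def by (rule g_meas[OF sb\<nu> fin\<nu>])
  have gm\<mu>: "g \<in> borel_measurable \<mu>" by (rule meas_b[OF sb\<mu> gm])
  have AE\<mu>: "AE x in \<mu>. 0 \<le> x \<and> x < 1" by (rule good_AE[OF g\<mu>])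
  have ig: "integrable \<nu> (\<lambda>t. 1/(1-t*x))" if "0 \<le> x" "x < 1" for x
    apply (rule good_intd[OF g\<nu>, where C=1]) apply simp
    using ineq2[of _ x] that by auto
  have iK: "integrable \<nu> (\<lambda>t. 1/(1-t))" using g\<nu> by (simp add: good_def)
  have gK: "g x \<le> K" if x: "0 \<le> x" "x < 1" for x
    unfolding g_def K_def
  proof (rule integral_mono_AE[OF ig[OF x] iK])
    show "AE t in \<nu>. 1/(1-t*x) \<le> 1/(1-t)"
      using good_AE[OF g\<nu>] apply (rule AE_mp) apply (rule AE_I2, clarify)
      subgoal for t using ineq2[of t x] ineq1[of t x] x by auto
      done
  qed
  have g0: "m0 \<le> g x" if x: "0 \<le> x" "x < 1" for x
  proof -
    interpret finite_measure \<nu> by (rule fin\<nu>)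
    have "m0 = (\<integral>t. 1 \<partial>\<nu>)" by (simp add: m0_def)
    also have "\<dots> \<le> g x" unfolding g_def
    proof (rule integral_mono_AE[OF _ ig[OF x]])
      show "integrable \<nu> (\<lambda>t. 1::real)" by simp
      show "AE t in \<nu>. 1 \<le> 1/(1-t*x)"
        using good_AE[OF g\<nu>] apply (rule AE_mp) apply (rule AE_I2, clarify)
      proof -
        fix t :: real assume t: "0 \<le> t" "t < 1"
        have "0 \<le> t*x" using t x by simp
        then have "1 - t*x \<le> 1" by simp
        moreover have "0 < 1 - t*x" using ineq1[of t x] t x by auto
        ultimately show "1 \<le> 1/(1-t*x)" by (simp add: le_divide_eq)
      qed
    qed
    finally show ?thesis .
  qed
  have m0pos: "0 < m0"
  proof (rule ccontr)
    assume "\<not> 0 < m0"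
    then have "m0 = 0" using measure_nonneg[of \<nu> "space \<nu>"] by (simp add: m0_def)
    then have e0: "emeasure \<nu> (space \<nu>) = 0"
      using finite_measure.emeasure_eq_measure[OF fin\<nu>] by (simp add: m0_def)
    have "msupp \<nu> = {}"
    proof -
      have "emeasure \<nu> (ball x r) = 0" for x r
      proof -
        have "ball x r \<in> sets \<nu>" using sb\<nu> by simp
        then have "ball x r \<subseteq> space \<nu>" by (rule sets.sets_into_space)
        then have "emeasure \<nu> (ball x r) \<le> emeasure \<nu> (space \<nu>)" by (rule emeasure_mono) simp
        then show ?thesis using e0 by simp
      qed
      then show ?thesis unfolding msupp_def by (auto intro!: exI[of _ "1::real"])
    qed
    moreover have "infinite (msupp \<nu>)" using b by (simp add: in_M0_def in_M_def \<nu>_def)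
    ultimately show False by simp
  qed
  have gs: "(\<lambda>i. m i * x^i) sums g x" if x: "\<bar>x\<bar> \<le> 1" for x
  proof -
    have "x \<in> {-1..1}" using x by auto
    from tendsto_uniform_limitI[OF good_series[OF g\<nu>, of 1] this]
    show ?thesis by (simp add: sums_def m_def g_def)
  qed
  have mnn: "0 \<le> m i" for i unfolding m_def by (rule nonneg_moment[OF g\<nu>])
  have gnn: "AE x in \<mu>. 0 \<le> g x"
    using AE\<mu> apply (rule AE_mp) apply (rule AE_I2, clarify)
    subgoal for x using g0[of x] m0pos by auto
    done
  have sD: "sets D = sets borel" by (simp add: D_def sb\<mu>)
  have eD: "emeasure D A = (\<integral>\<^sup>+x. ennreal (g x) * indicator A x \<partial>\<mu>)" if "A \<in> sets borel" for A
    unfolding D_def by (rule emeasure_density) (use gm\<mu> that sb\<mu> in auto)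
  have finD: "finite_measure D"
  proof (rule finite_measureI)
    interpret finite_measure \<mu> by (rule fin\<mu>)
    have "space D = UNIV" using sets_eq_imp_space_eq[OF sD] by simp
    then have "emeasure D (space D) = (\<integral>\<^sup>+x. ennreal (g x) * indicator UNIV x \<partial>\<mu>)"
      using eD[of UNIV] by simp
    also have "\<dots> \<le> (\<integral>\<^sup>+x. ennreal K \<partial>\<mu>)"
      apply (rule nn_integral_mono_AE)
      using AE\<mu> apply (rule AE_mp) apply (rule AE_I2, clarify)
      subgoal for x using gK[of x] by (auto intro: ennreal_leI)
      done
    also have "\<dots> = ennreal K * emeasure \<mu> (space \<mu>)" by simp
    also have "\<dots> < \<infinity>"
      using finite_measure.emeasure_finite[OF fin\<mu>, of "space \<mu>"]
      by (simp add: ennreal_mult_eq_top_iff less_top[symmetric])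
    finally show "emeasure D (space D) \<noteq> \<infinity>" by simp
  qed
  have nD: "emeasure D (-{0..<1}) = 0"
  proof -
    have "emeasure D (-{0..<1}) = (\<integral>\<^sup>+x. ennreal (g x) * indicator (-{0..<1}) x \<partial>\<mu>)"
      by (rule eD) simp
    also have "\<dots> = (\<integral>\<^sup>+x. 0 \<partial>\<mu>)"
      apply (rule nn_integral_cong_AE)
      using AE\<mu> apply (rule AE_mp) apply (rule AE_I2) by auto
    finally show ?thesis by simp
  qed
  have iD: "integrable D (\<lambda>t. 1/(1-t))"
    unfolding D_def
  proof (subst integrable_density)
    show "(\<lambda>t. 1/(1-t)) \<in> borel_measurable \<mu>" by (rule meas_b[OF sb\<mu>]) simp
    show "g \<in> borel_measurable \<mu>" by (rule gm\<mu>)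
    show "AE x in \<mu>. 0 \<le> g x" by (rule gnn)
    show "integrable \<mu> (\<lambda>x. g x *\<^sub>R (1/(1-x)))"
    proof (rule good_intd[OF g\<mu>, where C=K])
      show "(\<lambda>x. g x *\<^sub>R (1/(1-x))) \<in> borel_measurable borel" using gm by measurable
      fix t :: real assume t: "0 \<le> t" "t < 1"
      have "0 \<le> g t" using g0[OF t] m0pos by simp
      moreover have "0 < 1 - t" using t by simp
      ultimately show "\<bar>g t *\<^sub>R (1/(1-t))\<bar> \<le> K * (1/(1-t))"
        using gK[OF t] by (simp add: abs_mult divide_right_mono)
    qed
  qed
  have gD: "good D" using sD finD nD iD by (simp add: good_def)
  have suppD: "infinite (msupp D)"
  proof -
    have "msupp \<mu> \<subseteq> msupp D"
    proof
      fix x assume "x \<in> msupp \<mu>"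
      then have xs: "\<And>r. r > 0 \<Longrightarrow> emeasure \<mu> (ball x r) \<noteq> 0" by (simp add: msupp_def)
      show "x \<in> msupp D" unfolding msupp_def
      proof (intro CollectI allI impI)
        fix r :: real assume r: "r > 0"
        have "ennreal m0 * emeasure \<mu> (ball x r) = (\<integral>\<^sup>+y. ennreal m0 * indicator (ball x r) y \<partial>\<mu>)"
          using sb\<mu> by (simp add: nn_integral_cmult_indicator)
        also have "\<dots> \<le> (\<integral>\<^sup>+y. ennreal (g y) * indicator (ball x r) y \<partial>\<mu>)"
          apply (rule nn_integral_mono_AE)
          using AE\<mu> apply (rule AE_mp) apply (rule AE_I2, clarify)
          subgoal for y using g0[of y] by (auto intro: ennreal_leI simp: indicator_def)
          done
        also have "\<dots> = emeasure D (ball x r)" by (rule eD[symmetric]) simp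
        finally have le: "ennreal m0 * emeasure \<mu> (ball x r) \<le> emeasure D (ball x r)" .
        have "ennreal m0 * emeasure \<mu> (ball x r) \<noteq> 0" using xs[OF r] m0pos by simp
        then show "emeasure D (ball x r) \<noteq> 0" using le by (auto simp: le_zero_eq)
      qed
    qed
    moreover have "infinite (msupp \<mu>)" using a by (simp add: in_M0_def in_M_def \<mu>_def)
    ultimately show ?thesis using infinite_super by blast
  qed
  have inMbr: "in_M (bracket a b)"
  proof -
    have "fst a * fst b = 1 \<or> fst a * fst b = -1" using a b by (auto simp: in_M0_def in_M_def)
    moreover have "emeasure D (-{0..1}) = 0"
    proof -
      have "emeasure D (-{0..1}) \<le> emeasure D (-{0..<1})" by (rule emeasure_mono) (auto simp: sD)
      then show ?thesis using nD by simp
    qed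
    ultimately show ?thesis using sD finD suppD by (simp add: in_M_def brk)
  qed
  show "in_M0 (bracket a b)" by (rule good_M0[OF inMbr]) (simp add: brk gD)
  fix l :: nat
  have it\<mu>: "integrable \<mu> (\<lambda>t. t^i)" for i
    by (rule good_intb[OF g\<mu>, where B=1]) (auto simp: power_le_one)
  have lim: "(\<lambda>n. \<integral>t. (\<Sum>i<n. m i * t^(l+i)) \<partial>\<mu>) \<longlonglongrightarrow> (\<integral>t. g t * t^l \<partial>\<mu>)"
  proof (rule integral_dominated_convergence[where w="\<lambda>t. K"])
    show "(\<lambda>t. g t * t^l) \<in> borel_measurable \<mu>" by (intro meas_b[OF sb\<mu>] borel_measurable_times gm) simp
    show "(\<lambda>t. \<Sum>i<n. m i * t^(l+i)) \<in> borel_measurable \<mu>" for n by (rule meas_b[OF sb\<mu>]) simp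
    show "integrable \<mu> (\<lambda>t. K)" by (rule good_intb[OF g\<mu>, where B="\<bar>K\<bar>"]) auto
    show "AE t in \<mu>. (\<lambda>n. \<Sum>i<n. m i * t^(l+i)) \<longlonglongrightarrow> g t * t^l"
      using AE\<mu> apply (rule AE_mp) apply (rule AE_I2, clarify)
    proof -
      fix t :: real assume t: "0 \<le> t" "t < 1"
      have "(\<lambda>n. \<Sum>i<n. m i * t^i) \<longlonglongrightarrow> g t" using gs[of t] t by (simp add: sums_def)
      then have "(\<lambda>n. t^l * (\<Sum>i<n. m i * t^i)) \<longlonglongrightarrow> t^l * g t" by (rule tendsto_mult_left)
      moreover have "t^l * (\<Sum>i<n. m i * t^i) = (\<Sum>i<n. m i * t^(l+i))" for n
        by (simp add: sum_distrib_left power_add algebra_simps)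
      ultimately show "(\<lambda>n. \<Sum>i<n. m i * t^(l+i)) \<longlonglongrightarrow> g t * t^l" by (simp add: mult.commute)
    qed
    show "AE t in \<mu>. norm (\<Sum>i<n. m i * t^(l+i)) \<le> K" for n
      using AE\<mu> apply (rule AE_mp) apply (rule AE_I2, clarify)
    proof -
      fix t :: real assume t: "0 \<le> t" "t < 1"
      have nn: "0 \<le> (\<Sum>i<n. m i * t^(l+i))" using mnn t by (intro sum_nonneg) auto
      have "(\<Sum>i<n. m i * t^(l+i)) \<le> (\<Sum>i<n. m i * t^i)"
      proof (rule sum_mono)
        fix i assume "i \<in> {..<n}"
        have "t^(l+i) \<le> t^i" using t by (simp add: power_add mult_left_le_one_le power_le_one)
        then show "m i * t^(l+i) \<le> m i * t^i" using mnn[of i] by (rule mult_left_mono)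
      qed
      also have "\<dots> \<le> (\<Sum>i. m i * t^i)"
        using gs[of t] t mnn by (intro sum_le_suminf) (auto simp: sums_iff)
      also have "\<dots> = g t" using gs[of t] t by (simp add: sums_iff)
      also have "\<dots> \<le> K" using gK[OF t] .
      finally show "norm (\<Sum>i<n. m i * t^(l+i)) \<le> K" using nn by simp
    qed
  qed
  have "(\<integral>t. (\<Sum>i<n. m i * t^(l+i)) \<partial>\<mu>) = (\<Sum>i<n. (\<integral>t. t^(l+i) \<partial>\<mu>) * m i)" for n
    using it\<mu> by (subst Bochner_Integration.integral_sum) (auto simp: mult.commute)
  with lim have s1: "(\<lambda>i. (\<integral>t. t^(l+i) \<partial>\<mu>) * m i) sums (\<integral>t. g t * t^l \<partial>\<mu>)"
    by (simp add: sums_def)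
  have intD: "(\<integral>t. t^l \<partial>D) = (\<integral>t. g t * t^l \<partial>\<mu>)"
    unfolding D_def by (subst integral_density) (use gm\<mu> gnn sb\<mu> in auto)
  from sums_mult[OF s1, of "fst a * fst b"]
  show "(\<lambda>i. sint a (\<lambda>t. t^(l+i)) * sint b (\<lambda>t. t^i)) sums sint (bracket a b) (\<lambda>t. t^l)"
    by (simp add: sint_def brk intD m_def \<mu>_def \<nu>_def algebra_simps)
qed






lemma nik_cons: "ss \<noteq> [] \<Longrightarrow> nik (s # ss) = bracket s (nik ss)"
  by (cases ss) auto

lemma nik_M0: "ss \<noteq> [] \<Longrightarrow> (\<forall>s\<in>set ss. in_M0 s) \<Longrightarrow> in_M0 (nik ss)"
proof (induction ss)
  case Nil then show ?case by simp
next
  case (Cons s ss)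
  show ?case
  proof (cases "ss = []")
    case True then show ?thesis using Cons by simp
  next
    case False
    then show ?thesis using Cons by (simp add: nik_cons bracket_main(1))
  qed
qed

lemma coeff_unique:
  fixes a b :: "nat \<Rightarrow> real"
  assumes A: "\<And>x. x \<in> {-1..1} \<Longrightarrow> (\<lambda>i. a i * x^i) sums f x"
      and B: "\<And>x. x \<in> {-1..1} \<Longrightarrow> (\<lambda>i. b i * x^i) sums f x"
  shows "a = b"
proof -
  define d where "d i = a i - b i" for i
  have D: "(\<lambda>i. d i * x^i) sums 0" if "x \<in> {-1..1}" for x
    using sums_diff[OF A[OF that] B[OF that]] by (simp add: d_def left_diff_distrib)
  have "d n = 0" for n
  proof (induction n rule: less_induct)
    case (less n)
    have S: "(\<lambda>i. d (i+n) * x^i) sums 0" if x: "x \<noteq> 0" "norm x < 1" for x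
    proof -
      have xi: "x \<in> {-1..1}" using x by auto
      have "(\<lambda>i. d (i+n) * x^(i+n)) sums (0 - (\<Sum>i<n. d i * x^i))"
        using sums_split_initial_segment[OF D[OF xi], of n] by simp
      also have "(\<Sum>i<n. d i * x^i) = 0" using less by simp
      finally have "(\<lambda>i. d (i+n) * x^(i+n)) sums 0" by simp
      from sums_mult[OF this, of "1 / x^n"]
      have "(\<lambda>i. 1 / x^n * (d (i+n) * x^(i+n))) sums 0" by simp
      moreover have "1 / x^n * (d (i+n) * x^(i+n)) = d (i+n) * x^i" for i
        using x by (simp add: power_add field_simps)
      ultimately show ?thesis by simp
    qed
    have "((\<lambda>x::real. 0) \<longlongrightarrow> d (0+n)) (at 0)"
      by (rule powser_limit_0_strong[of 1 "\<lambda>i. d (i+n)" "\<lambda>x. 0"]) (use S in auto)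
    then show ?case using LIM_const_eq[of "0::real" "d n" 0] by simp
  qed
  then show ?thesis by (auto simp: d_def fun_eq_iff)
qed

lemma map_upt_cons: "k < j + 1 \<Longrightarrow> map sig [k..<j+1] = sig k # map sig [Suc k..<j+1]"
  by (simp add: upt_conv_Cons del: upt_Suc)




theorem theorem2p1:
  fixes p :: nat and lam1 :: "nat \<Rightarrow> nat \<Rightarrow> real"
  assumes "p \<ge> 1"
  shows "(\<exists>sig :: nat \<Rightarrow> smeasure.
            (\<forall>j\<in>{1..p}. in_M0 (sig j)) \<and>
            (\<forall>j\<in>{1..p}. uniform_limit {-1..1}
                (\<lambda>n x. \<Sum>i<n. lam1 i j * x ^ i)
                (ctr (nik (map sig [1..<j+1]))) sequentially))
     \<longleftrightarrow>
         (\<exists>lam :: nat \<Rightarrow> nat \<Rightarrow> nat \<Rightarrow> real.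
            (\<forall>j\<in>{1..p}. \<forall>i. lam i j 1 = lam1 i j) \<and>
            (\<forall>k\<in>{1..<p}. \<forall>j\<in>{k+1..p}. \<forall>l.
                (\<lambda>i. lam (l + i) k k * lam i j (k + 1)) sums lam l j k) \<and>
            (\<forall>k\<in>{1..p}. \<forall>j\<in>{k..p}. rhmp_solvable (\<lambda>i. lam i j k)))"
proof
  assume "\<exists>sig :: nat \<Rightarrow> smeasure.
            (\<forall>j\<in>{1..p}. in_M0 (sig j)) \<and>
            (\<forall>j\<in>{1..p}. uniform_limit {-1..1}
                (\<lambda>n x. \<Sum>i<n. lam1 i j * x ^ i)
                (ctr (nik (map sig [1..<j+1]))) sequentially)"
  then obtain sig :: "nat \<Rightarrow> smeasure" where
    M: "\<And>j. j\<in>{1..p} \<Longrightarrow> in_M0 (sig j)" and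
    U: "\<And>j. j\<in>{1..p} \<Longrightarrow> uniform_limit {-1..1} (\<lambda>n x. \<Sum>i<n. lam1 i j * x ^ i)
                (ctr (nik (map sig [1..<j+1]))) sequentially"
    by blast
  define N where "N k j = nik (map sig [k..<j+1])" for k j
  define lam where "lam i j k = sint (N k j) (\<lambda>t. t^i)" for i j k
  have NM: "in_M0 (N k j)" if "1 \<le> k" "k \<le> j" "j \<le> p" for k j
    unfolding N_def using that by (intro nik_M0) (auto intro!: M)
  have Ncons: "N k j = bracket (sig k) (N (Suc k) j)" if "k < j" for k j
  proof -
    have e1: "map sig [k..<j+1] = sig k # map sig [Suc k..<j+1]" using that by (intro map_upt_cons) auto
    have e2: "map sig [Suc k..<j+1] \<noteq> []" using that by (simp del: upt_Suc)
    show ?thesis unfolding N_def e1 using nik_cons[OF e2] by simp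
  qed
  have Nsing: "N k k = sig k" for k by (simp add: N_def)
  show "\<exists>lam :: nat \<Rightarrow> nat \<Rightarrow> nat \<Rightarrow> real.
            (\<forall>j\<in>{1..p}. \<forall>i. lam i j 1 = lam1 i j) \<and>
            (\<forall>k\<in>{1..<p}. \<forall>j\<in>{k+1..p}. \<forall>l.
                (\<lambda>i. lam (l + i) k k * lam i j (k + 1)) sums lam l j k) \<and>
            (\<forall>k\<in>{1..p}. \<forall>j\<in>{k..p}. rhmp_solvable (\<lambda>i. lam i j k))"
  proof (intro exI[of _ lam] conjI ballI allI)
    fix j i assume j: "j \<in> {1..p}"
    have NM1: "in_M0 (N 1 j)" using j by (intro NM) auto
    have g: "good (snd (N 1 j))" by (rule M0_good[OF NM1])
    have iM: "in_M (N 1 j)" using NM1 by (simp add: in_M0_def)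
    have "(\<lambda>i. lam1 i j) = (\<lambda>i. lam i j 1)"
    proof (rule coeff_unique)
      fix x :: real assume x: "x \<in> {-1..1}"
      show "(\<lambda>i. lam1 i j * x^i) sums ctr (N 1 j) x"
        using tendsto_uniform_limitI[OF U[OF j] x] by (simp add: sums_def N_def)
      show "(\<lambda>i. lam i j 1 * x^i) sums ctr (N 1 j) x"
        using tendsto_uniform_limitI[OF ctr_series[OF iM g] x] by (simp add: sums_def lam_def)
    qed
    then show "lam i j 1 = lam1 i j" by (simp add: fun_eq_iff)
  next
    fix k j l assume k: "k \<in> {1..<p}" and j: "j \<in> {k+1..p}"
    have a: "in_M0 (sig k)" using k by (intro M) auto
    have b: "in_M0 (N (Suc k) j)" using k j by (intro NM) auto
    have "N k j = bracket (sig k) (N (Suc k) j)" using j by (intro Ncons) auto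
    then show "(\<lambda>i. lam (l + i) k k * lam i j (k + 1)) sums lam l j k"
      using bracket_main(2)[OF a b, of l] by (simp add: lam_def Nsing)
  next
    fix k j assume k: "k \<in> {1..p}" and j: "j \<in> {k..p}"
    have "in_M0 (N k j)" using k j by (intro NM) auto
    then show "rhmp_solvable (\<lambda>i. lam i j k)" unfolding rhmp_solvable_def lam_def by blast
  qed
next
  assume "\<exists>lam :: nat \<Rightarrow> nat \<Rightarrow> nat \<Rightarrow> real.
            (\<forall>j\<in>{1..p}. \<forall>i. lam i j 1 = lam1 i j) \<and>
            (\<forall>k\<in>{1..<p}. \<forall>j\<in>{k+1..p}. \<forall>l.
                (\<lambda>i. lam (l + i) k k * lam i j (k + 1)) sums lam l j k) \<and>
            (\<forall>k\<in>{1..p}. \<forall>j\<in>{k..p}. rhmp_solvable (\<lambda>i. lam i j k))"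
  then obtain lam :: "nat \<Rightarrow> nat \<Rightarrow> nat \<Rightarrow> real" where
    L1: "\<And>j i. j\<in>{1..p} \<Longrightarrow> lam i j 1 = lam1 i j" and
    LS: "\<And>k j l. k\<in>{1..<p} \<Longrightarrow> j\<in>{k+1..p} \<Longrightarrow>
                (\<lambda>i. lam (l + i) k k * lam i j (k + 1)) sums lam l j k" and
    LR: "\<And>k j. k\<in>{1..p} \<Longrightarrow> j\<in>{k..p} \<Longrightarrow> rhmp_solvable (\<lambda>i. lam i j k)"
    by blast
  define sig where "sig k = (SOME s. in_M0 s \<and> (\<forall>i. lam i k k = sint s (\<lambda>t. t^i)))" for k
  have sigP: "in_M0 (sig k) \<and> (\<forall>i. lam i k k = sint (sig k) (\<lambda>t. t^i))" if k: "k \<in> {1..p}" for k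
  proof -
    have "\<exists>s. in_M0 s \<and> (\<forall>i. lam i k k = sint s (\<lambda>t. t^i))"
      using LR[OF k, of k] k by (simp add: rhmp_solvable_def)
    then show ?thesis unfolding sig_def by (rule someI_ex)
  qed
  define N where "N k j = nik (map sig [k..<j+1])" for k j
  have Ncons: "N k j = bracket (sig k) (N (Suc k) j)" if "k < j" for k j
  proof -
    have e1: "map sig [k..<j+1] = sig k # map sig [Suc k..<j+1]" using that by (intro map_upt_cons) auto
    have e2: "map sig [Suc k..<j+1] \<noteq> []" using that by (simp del: upt_Suc)
    show ?thesis unfolding N_def e1 using nik_cons[OF e2] by simp
  qed
  have Nsing: "N k k = sig k" for k by (simp add: N_def)
  have claim: "\<forall>k. 1 \<le> k \<longrightarrow> k + d \<le> p \<longrightarrow>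
      in_M0 (N k (k+d)) \<and> (\<forall>i. sint (N k (k+d)) (\<lambda>t. t^i) = lam i (k+d) k)" for d
  proof (induction d)
    case 0
    show ?case using sigP by (auto simp: Nsing)
  next
    case (Suc d)
    show ?case
    proof (intro allI impI)
      fix k assume k1: "1 \<le> k" and kd: "k + Suc d \<le> p"
      have IH: "in_M0 (N (Suc k) (Suc k + d)) \<and> (\<forall>i. sint (N (Suc k) (Suc k + d)) (\<lambda>t. t^i) = lam i (Suc k + d) (Suc k))"
        using Suc.IH k1 kd by auto
      have a: "in_M0 (sig k)" and sa: "\<And>i. lam i k k = sint (sig k) (\<lambda>t. t^i)"
        using sigP[of k] k1 kd by auto
      have eq: "N k (k + Suc d) = bracket (sig k) (N (Suc k) (Suc k + d))"
        using Ncons[of k "k + Suc d"] by simp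
      have "in_M0 (N k (k + Suc d))" using bracket_main(1)[OF a conjunct1[OF IH]] eq by simp
      moreover have "sint (N k (k + Suc d)) (\<lambda>t. t^l) = lam l (k + Suc d) k" for l
      proof -
        have s1: "(\<lambda>i. lam (l+i) k k * lam i (k + Suc d) (k+1)) sums sint (N k (k + Suc d)) (\<lambda>t. t^l)"
          using bracket_main(2)[OF a conjunct1[OF IH], of l] IH eq by (simp add: sa)
        have s2: "(\<lambda>i. lam (l+i) k k * lam i (k + Suc d) (k+1)) sums lam l (k + Suc d) k"
          using k1 kd by (intro LS) auto
        show ?thesis using sums_unique2[OF s1 s2] .
      qed
      ultimately show "in_M0 (N k (k + Suc d)) \<and> (\<forall>i. sint (N k (k + Suc d)) (\<lambda>t. t^i) = lam i (k + Suc d) k)"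
        by blast
    qed
  qed
  show "\<exists>sig :: nat \<Rightarrow> smeasure.
            (\<forall>j\<in>{1..p}. in_M0 (sig j)) \<and>
            (\<forall>j\<in>{1..p}. uniform_limit {-1..1}
                (\<lambda>n x. \<Sum>i<n. lam1 i j * x ^ i)
                (ctr (nik (map sig [1..<j+1]))) sequentially)"
  proof (intro exI[of _ sig] conjI ballI)
    fix j assume j: "j \<in> {1..p}"
    show "in_M0 (sig j)" using sigP[OF j] by simp
    have c: "in_M0 (N 1 j) \<and> (\<forall>i. sint (N 1 j) (\<lambda>t. t^i) = lam i j 1)"
      using claim[of "j - 1"] j by auto
    have g: "good (snd (N 1 j))" by (rule M0_good) (use c in simp)
    have iM: "in_M (N 1 j)" using c by (simp add: in_M0_def)
    show "uniform_limit {-1..1} (\<lambda>n x. \<Sum>i<n. lam1 i j * x ^ i) (ctr (nik (map sig [1..<j+1]))) sequentially"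
      using ctr_series[OF iM g] c L1[OF j] by (simp add: N_def)
  qed
qed


end
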